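(* Let ${\cal G}$ be a locally finite graph and let $A_1,A_2,\dots$ be an increasing finite set exhaustion of ${\cal G}$. Then for any fixed $x,y\in{\cal G}$ and $t\ge0$, the sequence $K_{A_i}(x,y,t)$ is non-decreasing in $i$ and tends to a limit $K(x,y,t)$. This limit $K$ is independent of the choice of exhaustion, and $K\le G$ pointwise for every non-negative fundamental solution $G$ of the heat equation on ${\cal G}$.
   Context: A graph ${\cal G}$ consists of an undirected graph $(V,E)$ (multiple edges, self-loops allowed), edge lengths $\ell_e>0$, boundary vertices $\partial{\cal G}\subseteq V$, interior vertices $\mathring V=V\setminus\partial{\cal G}$, a vertex measure ${\cal V}$ (${\cal V}(v)>0$) and edge weights $a_e>0$; ${\cal G}$ is identified with its geometric realization. Locally finite: every vertex lies on finitely many edges. For edgewise linear $f$, $(\Delta f)(v)={\cal V}(v)^{-1}\sum_{e\sim\{u,v\}}a_e(f(v)-f(u))/\ell_e$. A function $u$ on ${\cal G}\times[0,\infty)$ satisfies the heat equation if it is continuous, edgewise linear in $x$, and $u_t=-\Delta u$ (both existing) at $x\in\mathring V$, $t>0$; it solves the Dirichlet initial value problem with initial value $f$ if also $u(x,0)=f(x)$ on $\mathring V$ and $u=0$ on $\partial{\cal G}$. Let $\delta_y$ be the edgewise linear function equal to $1/{\cal V}(y)$ at $y$ and $0$ at other vertices. A fundamental solution is a function $G(x,y,t)$ on ${\cal G}\times{\cal G}\times[0,\infty)$ such that for each $y\in\mathring V$, $(x,t)\mapsto G(x,y,t)$ solves the Dirichlet initial value problem with initial value $\delta_y$, $G(x,y,t)=0$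 for $y\in\partial{\cal G}$, and $G$ is edgewise linear in $x$ and in $y$. For finite $A\subseteq\mathring V$, let ${\cal G}_A$ be ${\cal G}$ with boundary $V\setminus A$; the space of edgewise linear functions vanishing outside $A$ is finite-dimensional, the operator $\Delta_A$ ($\Delta$ computed at vertices of $A$, zero elsewhere) is symmetric on it for the inner product $\int fg\,d{\cal V}$, and $K_A(x,y,t)=\sum_i e^{-t\lambda_i}\phi_i(x)\phi_i(y)$ for an orthonormal eigenbasis $\phi_i$ with $\Delta_A\phi_i=\lambda_i\phi_i$. An increasing finite set exhaustion is a sequence of finite sets $A_1\subseteq A_2\subseteq\cdots\subseteq\mathring V$ whose union is $\mathring V$. *)

theory Defs
  imports "HOL-Analysis.Analysis"
begin

text \<open>Edges are abstract elements of type 'e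
  (so multiple edges and self-loops are allowed); ends G e is the pair of endpoints
  (the order only fixes an orientation used to parametrize the edge).\<close>

record ('v, 'e) wgraph =
  verts :: "'v set"
  edges :: "'e set"
  ends  :: "'e \<Rightarrow> 'v \<times> 'v"
  len   :: "'e \<Rightarrow> real"
  bdry  :: "'v set"
  vmeas :: "'v \<Rightarrow> real"
  wt    :: "'e \<Rightarrow> real"

definition valid_graph :: "('v, 'e) wgraph \<Rightarrow> bool" where
  "valid_graph G \<longleftrightarrow> bdry G \<subseteq> verts G \<and>
     (\<forall>e\<in>edges G. fst (ends G e) \<in> verts G \<and> snd (ends G e) \<in> verts G
                  \<and> len G e > 0 \<and> wt G e > 0) \<and>
     (\<forall>v\<in>verts G. vmeas G v > 0)"

definition interior :: "('v, 'e) wgraph \<Rightarrow> 'v set" where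
  "interior G = verts G - bdry G"

definition incident :: "('v, 'e) wgraph \<Rightarrow> 'v \<Rightarrow> 'e set" where
  "incident G v = {e \<in> edges G. fst (ends G e) = v \<or> snd (ends G e) = v}"

definition locally_finite :: "('v, 'e) wgraph \<Rightarrow> bool" where
  "locally_finite G \<longleftrightarrow> (\<forall>v\<in>verts G. finite (incident G v))"

definition other_end :: "('v, 'e) wgraph \<Rightarrow> 'e \<Rightarrow> 'v \<Rightarrow> 'v" where
  "other_end G e v = (if fst (ends G e) = v then snd (ends G e) else fst (ends G e))"

definition lap :: "('v, 'e) wgraph \<Rightarrow> ('v \<Rightarrow> real) \<Rightarrow> 'v \<Rightarrow> real" where
  "lap G f v = (1 / vmeas G v) *
     (\<Sum>e\<in>incident G v. wt G e * (f v - f (other_end G e v)) / len G e)"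

text \<open>Points of the geometric realization: vertices, and interior points of edges,
  Ep e s being at distance s (0 < s < len e) from the first endpoint of e.\<close>
datatype ('v, 'e) gpt = Vx 'v | Ep 'e real

definition pts :: "('v, 'e) wgraph \<Rightarrow> ('v, 'e) gpt set" where
  "pts G = {Vx v | v. v \<in> verts G} \<union> {Ep e s | e s. e \<in> edges G \<and> 0 < s \<and> s < len G e}"

definition epoint :: "('v, 'e) wgraph \<Rightarrow> 'e \<Rightarrow> real \<Rightarrow> ('v, 'e) gpt" where
  "epoint G e s = (if s = 0 then Vx (fst (ends G e))
                   else if s = len G e then Vx (snd (ends G e)) else Ep e s)"

definition lift :: "('v, 'e) wgraph \<Rightarrow> ('v \<Rightarrow> real) \<Rightarrow> ('v, 'e) gpt \<Rightarrow> real" where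
  "lift G f p = (case p of Vx v \<Rightarrow> f v
     | Ep e s \<Rightarrow> (1 - s / len G e) * f (fst (ends G e)) + (s / len G e) * f (snd (ends G e)))"

definition edgewise_linear :: "('v, 'e) wgraph \<Rightarrow> (('v, 'e) gpt \<Rightarrow> real) \<Rightarrow> bool" where
  "edgewise_linear G f \<longleftrightarrow> (\<forall>p\<in>pts G. f p = lift G (\<lambda>v. f (Vx v)) p)"

text \<open>Continuity on the realization times [0,\<infinity>): continuity on each closed edge
  times [0,\<infinity>) (weak/CW topology), and at (isolated) vertices.\<close>
definition graph_continuous :: "('v, 'e) wgraph \<Rightarrow> (('v, 'e) gpt \<Rightarrow> real \<Rightarrow> real) \<Rightarrow> bool" where
  "graph_continuous G u \<longleftrightarrow>
     (\<forall>v\<in>verts G. continuous_on {0..} (\<lambda>t. u (Vx v) t)) \<and>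
     (\<forall>e\<in>edges G. continuous_on ({0..len G e} \<times> {0..}) (\<lambda>(s, t). u (epoint G e s) t))"

definition heat_solution :: "('v, 'e) wgraph \<Rightarrow> (('v, 'e) gpt \<Rightarrow> real \<Rightarrow> real) \<Rightarrow> bool" where
  "heat_solution G u \<longleftrightarrow> graph_continuous G u \<and>
     (\<forall>t\<ge>0. edgewise_linear G (\<lambda>x. u x t)) \<and>
     (\<forall>v\<in>interior G. \<forall>t>0.
        ((\<lambda>\<tau>. u (Vx v) \<tau>) has_real_derivative (- lap G (\<lambda>w. u (Vx w) t) v)) (at t))"

definition dirichlet_ivp ::
  "('v, 'e) wgraph \<Rightarrow> (('v, 'e) gpt \<Rightarrow> real \<Rightarrow> real) \<Rightarrow> (('v, 'e) gpt \<Rightarrow> real) \<Rightarrow> bool" where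
  "dirichlet_ivp G u f \<longleftrightarrow> heat_solution G u \<and>
     (\<forall>v\<in>interior G. u (Vx v) 0 = f (Vx v)) \<and>
     (\<forall>v\<in>bdry G. \<forall>t\<ge>0. u (Vx v) t = 0)"

definition delta :: "('v, 'e) wgraph \<Rightarrow> 'v \<Rightarrow> ('v, 'e) gpt \<Rightarrow> real" where
  "delta G y = lift G (\<lambda>v. if v = y then 1 / vmeas G y else 0)"

definition fundamental_solution ::
  "('v, 'e) wgraph \<Rightarrow> (('v, 'e) gpt \<Rightarrow> ('v, 'e) gpt \<Rightarrow> real \<Rightarrow> real) \<Rightarrow> bool" where
  "fundamental_solution G K \<longleftrightarrow>
     (\<forall>y\<in>interior G. dirichlet_ivp G (\<lambda>x t. K x (Vx y) t) (delta G y)) \<and>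
     (\<forall>y\<in>bdry G. \<forall>x\<in>pts G. \<forall>t\<ge>0. K x (Vx y) t = 0) \<and>
     (\<forall>y\<in>pts G. \<forall>t\<ge>0. edgewise_linear G (\<lambda>x. K x y t)) \<and>
     (\<forall>x\<in>pts G. \<forall>t\<ge>0. edgewise_linear G (\<lambda>y. K x y t))"

text \<open>Orthonormal eigenbasis (indexed by i < card A) of Delta_A on the edgewise linear
  functions vanishing outside A (represented by their vertex values), w.r.t.
  the inner product sum over v of vmeas v * f v * g v.\<close>
definition is_eigenbasis ::
  "('v, 'e) wgraph \<Rightarrow> 'v set \<Rightarrow> (nat \<Rightarrow> 'v \<Rightarrow> real) \<Rightarrow> (nat \<Rightarrow> real) \<Rightarrow> bool" where
  "is_eigenbasis G A \<phi> lam \<longleftrightarrow>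
     (\<forall>i<card A. \<forall>v. v \<notin> A \<longrightarrow> \<phi> i v = 0) \<and>
     (\<forall>i<card A. \<forall>j<card A. (\<Sum>v\<in>A. vmeas G v * \<phi> i v * \<phi> j v) = (if i = j then 1 else 0)) \<and>
     (\<forall>i<card A. \<forall>v\<in>A. lap G (\<phi> i) v = lam i * \<phi> i v)"

definition heat_kernel ::
  "('v, 'e) wgraph \<Rightarrow> 'v set \<Rightarrow> ('v, 'e) gpt \<Rightarrow> ('v, 'e) gpt \<Rightarrow> real \<Rightarrow> real" where
  "heat_kernel G A x y t =
     (let (\<phi>, lam) = (SOME (\<phi>, lam). is_eigenbasis G A \<phi> lam)
      in \<Sum>i<card A. exp (- t * lam i) * lift G (\<phi> i) x * lift G (\<phi> i) y)"

definition exhaustion :: "('v, 'e) wgraph \<Rightarrow> (nat \<Rightarrow> 'v set) \<Rightarrow> bool" where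
  "exhaustion G A \<longleftrightarrow> (\<forall>i. finite (A i) \<and> A i \<subseteq> interior G) \<and>
     (\<forall>i. A i \<subseteq> A (Suc i)) \<and> (\<Union>i. A i) = interior G"

end

theory Submission
  imports Defs
begin


definition eb :: "('v, 'e) wgraph \<Rightarrow> 'v set \<Rightarrow> (nat \<Rightarrow> 'v \<Rightarrow> real) \<times> (nat \<Rightarrow> real)" where
  "eb G A = (SOME (\<phi>, lam). is_eigenbasis G A \<phi> lam)"

lemma hk_unfold:
  "heat_kernel G A x y t =
    (\<Sum>i<card A. exp (- t * snd (eb G A) i) * lift G (fst (eb G A) i) x * lift G (fst (eb G A) i) y)"
  unfolding heat_kernel_def eb_def[symmetric] Let_def by (simp add: case_prod_beta)

lemma lift_Vx[simp]: "lift G f (Vx v) = f v"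
  by (simp add: lift_def)

lemma lift_sum_comb:
  "lift G (\<lambda>v. \<Sum>i\<in>I. c i * f i v) p = (\<Sum>i\<in>I. c i * lift G (f i) p)"
proof (cases p)
  case (Vx v) then show ?thesis by simp
next
  case (Ep e s)
  define \<alpha> where "\<alpha> = s / len G e"
  have "\<And>i. c i * ((1 - \<alpha>) * f i (fst (ends G e)) + \<alpha> * f i (snd (ends G e)))
      = (1 - \<alpha>) * (c i * f i (fst (ends G e))) + \<alpha> * (c i * f i (snd (ends G e)))"
    by (simp add: algebra_simps)
  then show ?thesis using Ep
    by (simp only: lift_def gpt.case \<alpha>_def[symmetric] sum_distrib_left sum.distrib)
qed

lemma lift_mono:
  assumes "valid_graph G" "p \<in> pts G" "\<And>v. v \<in> verts G \<Longrightarrow> f v \<le> g v"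
  shows "lift G f p \<le> lift G g p"
proof -
  from assms(2) consider (V) v where "p = Vx v" "v \<in> verts G"
    | (E) e s where "p = Ep e s" "e \<in> edges G" "0 < s" "s < len G e"
    unfolding pts_def by blast
  then show ?thesis
  proof cases
    case V then show ?thesis using assms(3) by simp
  next
    case E
    have ends: "fst (ends G e) \<in> verts G" "snd (ends G e) \<in> verts G"
      using assms(1) E(2) unfolding valid_graph_def by auto
    have l: "len G e > 0" using assms(1) E(2) unfolding valid_graph_def by auto
    have c1: "0 \<le> 1 - s / len G e" using E l by (simp add: field_simps)
    have c2: "0 \<le> s / len G e" using E l by simp
    show ?thesis unfolding E(1) lift_def gpt.case
      by (intro add_mono mult_left_mono assms(3) ends c1 c2)
  qed
qed

lemma Vx_pts: "v \<in> verts G \<Longrightarrow> Vx v \<in> pts G"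
  by (simp add: pts_def)

lemma lap_comb:
  "lap G (\<lambda>u. a * f u + b * h u + c) v = a * lap G f v + b * lap G h v"
proof -
  have "\<And>e. wt G e * ((a * f v + b * h v + c) - (a * f (other_end G e v) + b * h (other_end G e v) + c)) / len G e
     = a * (wt G e * (f v - f (other_end G e v)) / len G e) + b * (wt G e * (h v - h (other_end G e v)) / len G e)"
    by (simp add: algebra_simps add_divide_distrib diff_divide_distrib)
  then show ?thesis unfolding lap_def
    by (simp add: sum.distrib sum_distrib_left algebra_simps)
qed

lemma lap_sum_comb:
  "lap G (\<lambda>u. \<Sum>i\<in>I. c i * f i u) v = (\<Sum>i\<in>I. c i * lap G (f i) v)"
proof -
  have "\<And>e. wt G e * ((\<Sum>i\<in>I. c i * f i v) - (\<Sum>i\<in>I. c i * f i (other_end G e v))) / len G e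
     = (\<Sum>i\<in>I. c i * (wt G e * (f i v - f i (other_end G e v)) / len G e))"
    by (simp add: sum_distrib_left sum_divide_distrib algebra_simps flip: sum_subtractf)
  then show ?thesis unfolding lap_def
    by (simp add: sum_distrib_left algebra_simps sum.swap[of _ "incident G v"])
qed

lemma lap_nonpos:
  assumes valid: "valid_graph G" and w: "w \<in> verts G"
    and le: "\<And>u. u \<in> verts G \<Longrightarrow> f w \<le> f u"
  shows "lap G f w \<le> 0"
proof -
  have "(\<Sum>e\<in>incident G w. wt G e * (f w - f (other_end G e w)) / len G e) \<le> 0"
  proof (rule sum_nonpos)
    fix e assume e: "e \<in> incident G w"
    then have e': "e \<in> edges G" by (simp add: incident_def)
    have o: "other_end G e w \<in> verts G"
      using valid e' unfolding valid_graph_def other_end_def by auto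
    have "wt G e > 0" "len G e > 0" using valid e' unfolding valid_graph_def by auto
    moreover have "f w - f (other_end G e w) \<le> 0" using le[OF o] by simp
    ultimately show "wt G e * (f w - f (other_end G e w)) / len G e \<le> 0"
      by (intro divide_nonpos_pos mult_nonneg_nonpos) auto
  qed
  moreover have "vmeas G w > 0" using valid w unfolding valid_graph_def by auto
  ultimately show ?thesis unfolding lap_def
    by (intro mult_nonneg_nonpos) auto
qed

lemma max_principle:
  assumes valid: "valid_graph G" and fin: "finite A" and sub: "A \<subseteq> verts G"
  and cont: "\<And>v. v \<in> A \<Longrightarrow> continuous_on {0..} (z v)"
  and der: "\<And>v t. v \<in> A \<Longrightarrow> t > 0 \<Longrightarrow> (z v has_real_derivative - lap G (\<lambda>u. z u t) v) (at t)"
  and init: "\<And>v. v \<in> A \<Longrightarrow> z v 0 \<ge> 0"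
  and bd: "\<And>u t. u \<in> verts G \<Longrightarrow> u \<notin> A \<Longrightarrow> t \<ge> 0 \<Longrightarrow> z u t \<ge> 0"
  and v: "v \<in> A" and t: "t \<ge> 0"
  shows "z v t \<ge> 0"
proof (rule ccontr)
  assume "\<not> ?thesis" hence neg: "z v t < 0" by simp
  define \<epsilon> where "\<epsilon> = - z v t / (2 * (1 + t))"
  have \<epsilon>pos: "\<epsilon> > 0" unfolding \<epsilon>_def using neg t by (intro divide_pos_pos) auto
  define y where "y u s = z u s + \<epsilon> * (1 + s)" for u s
  have "z v t * (1 + t) < 0" using neg t by (intro mult_neg_pos) auto
  then have yvT: "y v t < 0" unfolding y_def \<epsilon>_def using neg t by (simp add: field_simps)
  define S where "S = {s \<in> {0..t}. \<exists>u\<in>A. y u s \<le> 0}"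
  have tS: "t \<in> S" unfolding S_def using t v yvT by (auto intro!: bexI[of _ v])
  have bdd: "bdd_below S" unfolding S_def by (rule bdd_belowI[of _ 0]) auto
  have "S = (\<Union>u\<in>A. {s \<in> {0..t}. y u s \<le> 0})" unfolding S_def by auto
  moreover have "closed {s \<in> {0..t}. y u s \<le> 0}" if "u \<in> A" for u
  proof (rule continuous_on_closed_Collect_le)
    have "continuous_on {0..t} (z u)" using cont[OF that] by (rule continuous_on_subset) auto
    then show "continuous_on {0..t} (y u)" unfolding y_def
      by (intro continuous_intros) auto
  qed (auto intro: continuous_intros)
  ultimately have closed: "closed S" using fin by auto
  define t0 where "t0 = Inf S"
  have t0S: "t0 \<in> S" unfolding t0_def using closed_contains_Inf[OF _ bdd closed] tS by auto
  then obtain u0 where u0: "u0 \<in> A" "y u0 t0 \<le> 0" and t0r: "0 \<le> t0" "t0 \<le> t"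
    unfolding S_def by auto
  have t0pos: "t0 > 0"
  proof (rule ccontr)
    assume "\<not> t0 > 0" then have "t0 = 0" using t0r by simp
    then have "y u0 t0 > 0" unfolding y_def using init[OF u0(1)] \<epsilon>pos by simp
    then show False using u0 by simp
  qed
  define m where "m = Min ((\<lambda>u. y u t0) ` A)"
  have "m \<in> (\<lambda>u. y u t0) ` A" unfolding m_def using fin u0 by (intro Min_in) auto
  then obtain w where w: "w \<in> A" "y w t0 = m" by auto
  have wmin: "y w t0 \<le> y u t0" if "u \<in> A" for u
    unfolding w(2) m_def using fin that by (intro Min_le) auto
  have ywle: "y w t0 \<le> 0" using wmin[OF u0(1)] u0 by simp
  have lapeq: "lap G (\<lambda>u. y u t0) w = lap G (\<lambda>u. z u t0) w"
    using lap_comb[of G 1 "\<lambda>u. z u t0" 0 "\<lambda>u. z u t0" "\<epsilon> * (1 + t0)" w] by (simp add: y_def)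
  have "lap G (\<lambda>u. y u t0) w \<le> 0"
  proof (rule lap_nonpos[OF valid])
    show "w \<in> verts G" using w sub by auto
    fix u assume u: "u \<in> verts G"
    show "y w t0 \<le> y u t0"
    proof (cases "u \<in> A")
      case True then show ?thesis using wmin by simp
    next
      case False
      have "z u t0 \<ge> 0" using bd[OF u False] t0r by simp
      then have "y u t0 > 0" unfolding y_def using \<epsilon>pos t0r by (simp add: add_nonneg_pos)
      then show ?thesis using ywle by simp
    qed
  qed
  then have lapz: "lap G (\<lambda>u. z u t0) w \<le> 0" using lapeq by simp
  have deriv: "((\<lambda>s. z w s + \<epsilon> * (1 + s)) has_real_derivative (- lap G (\<lambda>u. z u t0) w + \<epsilon> * (0 + 1))) (at t0)"
    by (intro DERIV_add der[OF w(1) t0pos] DERIV_cmult DERIV_add DERIV_const DERIV_ident)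
  have pos: "- lap G (\<lambda>u. z u t0) w + \<epsilon> * (0 + 1) > 0" using lapz \<epsilon>pos by simp
  from DERIV_pos_inc_left[OF deriv pos] obtain d where d: "d > 0"
    "\<And>h. h > 0 \<Longrightarrow> h < d \<Longrightarrow> z w (t0 - h) + \<epsilon> * (1 + (t0 - h)) < z w t0 + \<epsilon> * (1 + t0)" by blast
  define h where "h = min d t0 / 2"
  have h: "h > 0" "h < d" "h < t0" unfolding h_def using d t0pos by auto
  have "y w (t0 - h) < y w t0" unfolding y_def using d(2)[OF h(1,2)] .
  then have "t0 - h \<in> S" unfolding S_def using ywle h t0r w(1) by (auto intro!: bexI[of _ w])
  then have "t0 \<le> t0 - h" unfolding t0_def using bdd by (rule cInf_lower)
  then show False using h by simp
qed



definition ip :: "('v, 'e) wgraph \<Rightarrow> 'v set \<Rightarrow> ('v \<Rightarrow> real) \<Rightarrow> ('v \<Rightarrow> real) \<Rightarrow> real" where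
  "ip G A f g = (\<Sum>v\<in>A. vmeas G v * f v * g v)"

definition qf :: "('v, 'e) wgraph \<Rightarrow> 'v set \<Rightarrow> ('v \<Rightarrow> real) \<Rightarrow> real" where
  "qf G A f = (\<Sum>v\<in>A. vmeas G v * lap G f v * f v)"

definition supp :: "'v set \<Rightarrow> ('v \<Rightarrow> real) \<Rightarrow> bool" where
  "supp A f \<longleftrightarrow> (\<forall>v. v \<notin> A \<longrightarrow> f v = 0)"

lemma lap_lin2: "lap G (\<lambda>u. a * f u + b * h u) v = a * lap G f v + b * lap G h v"
  using lap_comb[of G a f b h 0 v] by simp

lemma edge_term:
  assumes e: "e \<in> edges G" and fin: "finite A" and g: "supp A g"
  shows "(\<Sum>v\<in>A. if e \<in> incident G v then g v * (wt G e * (f v - f (other_end G e v)) / len G e) else 0)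
    = wt G e / len G e * (g (fst (ends G e)) - g (snd (ends G e))) * (f (fst (ends G e)) - f (snd (ends G e)))"
proof -
  define a where "a = fst (ends G e)"
  define b where "b = snd (ends G e)"
  define h where "h v = (if e \<in> incident G v then g v * (wt G e * (f v - f (other_end G e v)) / len G e) else 0)" for v
  have inc: "e \<in> incident G v \<longleftrightarrow> v = a \<or> v = b" for v
    using e unfolding incident_def a_def b_def by auto
  have "(\<Sum>v\<in>A. h v) = (\<Sum>v\<in>A \<union> {a, b}. h v)"
    by (rule sum.mono_neutral_left) (use fin g in \<open>auto simp: h_def supp_def\<close>)
  also have "\<dots> = (\<Sum>v\<in>{a, b}. h v)"
    by (rule sum.mono_neutral_right) (use fin in \<open>auto simp: h_def inc\<close>)
  also have "\<dots> = wt G e / len G e * (g a - g b) * (f a - f b)"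
  proof (cases "a = b")
    case True
    then show ?thesis by (simp add: h_def inc other_end_def a_def b_def)
  next
    case False
    have o1: "other_end G e a = b" unfolding other_end_def a_def b_def by simp
    have o2: "other_end G e b = a" using False unfolding other_end_def a_def b_def by auto
    show ?thesis using False by (simp add: h_def inc o1 o2 algebra_simps diff_divide_distrib)
  qed
  finally show ?thesis unfolding h_def a_def b_def .
qed

definition dform :: "('v, 'e) wgraph \<Rightarrow> 'e \<Rightarrow> ('v \<Rightarrow> real) \<Rightarrow> ('v \<Rightarrow> real) \<Rightarrow> real" where
  "dform G e g f = wt G e / len G e * (g (fst (ends G e)) - g (snd (ends G e))) * (f (fst (ends G e)) - f (snd (ends G e)))"

lemma dform_sym: "dform G e g f = dform G e f g"
  by (simp add: dform_def mult_ac)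

lemma dirichlet_form:
  assumes lf: "locally_finite G" and fin: "finite A" and sub: "A \<subseteq> verts G" and g: "supp A g"
    and valid: "valid_graph G"
  shows "(\<Sum>v\<in>A. vmeas G v * lap G f v * g v) = (\<Sum>e\<in>(\<Union>v\<in>A. incident G v). dform G e g f)"
proof -
  define E where "E = (\<Union>v\<in>A. incident G v)"
  have finE: "finite E" unfolding E_def using fin sub lf unfolding locally_finite_def by auto
  have Eed: "E \<subseteq> edges G" unfolding E_def incident_def by auto
  define F where "F v e = g v * (wt G e * (f v - f (other_end G e v)) / len G e)" for v e
  have "(\<Sum>v\<in>A. vmeas G v * lap G f v * g v) = (\<Sum>v\<in>A. \<Sum>e\<in>incident G v. F v e)"
  proof (rule sum.cong[OF refl])
    fix v assume v: "v \<in> A"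
    have "vmeas G v > 0" using valid v sub unfolding valid_graph_def by auto
    then have "vmeas G v * lap G f v * g v = (\<Sum>e\<in>incident G v. wt G e * (f v - f (other_end G e v)) / len G e) * g v"
      unfolding lap_def by simp
    also have "\<dots> = (\<Sum>e\<in>incident G v. F v e)"
      unfolding sum_distrib_right F_def by (simp add: mult.commute)
    finally show "vmeas G v * lap G f v * g v = (\<Sum>e\<in>incident G v. F v e)" .
  qed
  also have "\<dots> = (\<Sum>v\<in>A. \<Sum>e\<in>E. if e \<in> incident G v then F v e else 0)"
  proof (rule sum.cong[OF refl])
    fix v assume v: "v \<in> A"
    have "incident G v = E \<inter> incident G v" unfolding E_def using v by auto
    then show "(\<Sum>e\<in>incident G v. F v e) = (\<Sum>e\<in>E. if e \<in> incident G v then F v e else 0)"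
      using sum.inter_restrict[OF finE, of "\<lambda>e. F v e" "incident G v"] by simp
  qed
  also have "\<dots> = (\<Sum>e\<in>E. \<Sum>v\<in>A. if e \<in> incident G v then F v e else 0)"
    by (rule sum.swap)
  also have "\<dots> = (\<Sum>e\<in>E. wt G e / len G e * (g (fst (ends G e)) - g (snd (ends G e))) * (f (fst (ends G e)) - f (snd (ends G e))))"
  proof (rule sum.cong[OF refl])
    fix e assume "e \<in> E"
    then have "e \<in> edges G" using Eed by auto
    from edge_term[OF this fin g, of f]
    show "(\<Sum>v\<in>A. if e \<in> incident G v then F v e else 0) = wt G e / len G e * (g (fst (ends G e)) - g (snd (ends G e))) * (f (fst (ends G e)) - f (snd (ends G e)))"
      unfolding F_def .
  qed
  finally show ?thesis unfolding E_def dform_def .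
qed

lemma lap_sym:
  assumes lf: "locally_finite G" and fin: "finite A" and sub: "A \<subseteq> verts G"
    and valid: "valid_graph G" and f: "supp A f" and g: "supp A g"
  shows "(\<Sum>v\<in>A. vmeas G v * lap G f v * g v) = (\<Sum>v\<in>A. vmeas G v * lap G g v * f v)"
  unfolding dirichlet_form[OF lf fin sub g valid] dirichlet_form[OF lf fin sub f valid]
  by (simp add: dform_sym)



definition fam :: "('v, 'e) wgraph \<Rightarrow> 'v set \<Rightarrow> nat \<Rightarrow> (nat \<Rightarrow> 'v \<Rightarrow> real) \<Rightarrow> (nat \<Rightarrow> real) \<Rightarrow> bool" where
  "fam G A k \<phi> lam \<longleftrightarrow> (\<forall>i<k. supp A (\<phi> i)) \<and>
     (\<forall>i<k. \<forall>j<k. ip G A (\<phi> i) (\<phi> j) = (if i = j then 1 else 0)) \<and>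
     (\<forall>i<k. \<forall>v\<in>A. lap G (\<phi> i) v = lam i * \<phi> i v)"

lemma eigenbasis_fam: "is_eigenbasis G A \<phi> lam \<longleftrightarrow> fam G A (card A) \<phi> lam"
  unfolding is_eigenbasis_def fam_def supp_def ip_def by simp

definition complete :: "('v, 'e) wgraph \<Rightarrow> 'v set \<Rightarrow> nat \<Rightarrow> (nat \<Rightarrow> 'v \<Rightarrow> real) \<Rightarrow> bool" where
  "complete G A k \<phi> \<longleftrightarrow> (\<forall>a\<in>A. \<forall>b\<in>A. vmeas G a * (\<Sum>j<k. \<phi> j a * \<phi> j b) = (if a = b then 1 else 0))"

definition res :: "('v, 'e) wgraph \<Rightarrow> 'v set \<Rightarrow> nat \<Rightarrow> (nat \<Rightarrow> 'v \<Rightarrow> real) \<Rightarrow> 'v \<Rightarrow> 'v \<Rightarrow> real" where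
  "res G A k \<phi> a b = (if b \<in> A then (if a = b then 1 else 0) - vmeas G a * (\<Sum>j<k. \<phi> j a * \<phi> j b) else 0)"

lemma ip_sym: "ip G A f g = ip G A g f"
  unfolding ip_def by (simp add: mult_ac)

lemma ip_lin: "ip G A (\<lambda>v. a * f v + b * h v) g = a * ip G A f g + b * ip G A h g"
  unfolding ip_def by (simp add: sum.distrib sum_distrib_left algebra_simps)

lemma ip_cong: "(\<And>v. v \<in> A \<Longrightarrow> f v = f' v) \<Longrightarrow> (\<And>v. v \<in> A \<Longrightarrow> g v = g' v) \<Longrightarrow> ip G A f g = ip G A f' g'"
  unfolding ip_def by (rule sum.cong) auto

lemma ip_sum_right: "ip G A f (\<lambda>b. \<Sum>j\<in>J. c j * g j b) = (\<Sum>j\<in>J. c j * ip G A f (g j))"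
  unfolding ip_def by (simp add: sum_distrib_left sum.swap[of _ J] mult_ac)

lemma ip_delta_right: "finite A \<Longrightarrow> a \<in> A \<Longrightarrow> ip G A f (\<lambda>b. if a = b then 1 else 0) = vmeas G a * f a"
  unfolding ip_def by (simp add: if_distrib[of "\<lambda>x. _ * x"] cong: if_cong)

lemma ip_diff_right: "ip G A f (\<lambda>b. x b - y b) = ip G A f x - ip G A f y"
  unfolding ip_def by (simp add: sum_subtractf algebra_simps)

lemma sq_term_nonneg: "(c::real) \<ge> 0 \<Longrightarrow> c * x * x \<ge> 0"
  by (simp add: mult.assoc)

lemma ip_nonneg: "valid_graph G \<Longrightarrow> A \<subseteq> verts G \<Longrightarrow> ip G A f f \<ge> 0"
  unfolding ip_def valid_graph_def by (intro sum_nonneg sq_term_nonneg) (auto intro: less_imp_le)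

lemma ip_zero:
  assumes "valid_graph G" "A \<subseteq> verts G" "finite A" "ip G A f f = 0" "v \<in> A"
  shows "f v = 0"
proof -
  have pos: "\<And>u. u \<in> A \<Longrightarrow> vmeas G u > 0" using assms(1,2) unfolding valid_graph_def by auto
  have "\<forall>u\<in>A. vmeas G u * f u * f u = 0"
    using assms(4) unfolding ip_def
    by (subst sum_nonneg_eq_0_iff[symmetric]) (use assms(3) pos in \<open>auto intro!: sq_term_nonneg simp: less_imp_le\<close>)
  then show ?thesis using assms(5) pos[OF assms(5)] by auto
qed

lemma ip_pos:
  assumes "valid_graph G" "A \<subseteq> verts G" "finite A" "v \<in> A" "f v \<noteq> 0"
  shows "ip G A f f > 0"
  using ip_nonneg[OF assms(1,2), of f] ip_zero[OF assms(1-3) _ assms(4), of f] assms(5) by linarith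

lemma res_supp: "supp A (res G A k \<phi> a)"
  unfolding supp_def res_def by simp

lemma res_orth:
  assumes fam: "fam G A k \<phi> lam" and fin: "finite A" and a: "a \<in> A" and i: "i < k"
  shows "ip G A (res G A k \<phi> a) (\<phi> i) = 0"
proof -
  have "ip G A (res G A k \<phi> a) (\<phi> i) = ip G A (\<phi> i) (res G A k \<phi> a)" by (rule ip_sym)
  also have "\<dots> = ip G A (\<phi> i) (\<lambda>b. (if a = b then 1 else 0) - (\<Sum>j<k. (vmeas G a * \<phi> j a) * \<phi> j b))"
    by (rule ip_cong) (auto simp: res_def sum_distrib_left mult_ac)
  also have "\<dots> = vmeas G a * \<phi> i a - (\<Sum>j<k. (vmeas G a * \<phi> j a) * ip G A (\<phi> i) (\<phi> j))"
    by (simp add: ip_diff_right ip_sum_right ip_delta_right fin a)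
  also have "(\<Sum>j<k. (vmeas G a * \<phi> j a) * ip G A (\<phi> i) (\<phi> j)) = (\<Sum>j<k. if i = j then vmeas G a * \<phi> j a else 0)"
    using fam i unfolding fam_def by (intro sum.cong) auto
  also have "\<dots> = vmeas G a * \<phi> i a" using i by simp
  finally show ?thesis by simp
qed

lemma res_norm:
  assumes fam: "fam G A k \<phi> lam" and fin: "finite A" and a: "a \<in> A"
  shows "ip G A (res G A k \<phi> a) (res G A k \<phi> a) = vmeas G a * (1 - vmeas G a * (\<Sum>j<k. \<phi> j a * \<phi> j a))"
proof -
  have "ip G A (res G A k \<phi> a) (res G A k \<phi> a) =
      ip G A (res G A k \<phi> a) (\<lambda>b. (if a = b then 1 else 0) - (\<Sum>j<k. (vmeas G a * \<phi> j a) * \<phi> j b))"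
    by (rule ip_cong) (auto simp: res_def sum_distrib_left mult_ac)
  also have "\<dots> = vmeas G a * res G A k \<phi> a a - (\<Sum>j<k. (vmeas G a * \<phi> j a) * ip G A (res G A k \<phi> a) (\<phi> j))"
    by (simp add: ip_diff_right ip_sum_right ip_delta_right fin a)
  also have "(\<Sum>j<k. (vmeas G a * \<phi> j a) * ip G A (res G A k \<phi> a) (\<phi> j)) = 0"
    using res_orth[OF fam fin a] by simp
  finally have eq: "ip G A (res G A k \<phi> a) (res G A k \<phi> a) = vmeas G a * res G A k \<phi> a a - 0" .
  have "res G A k \<phi> a a = 1 - vmeas G a * (\<Sum>j<k. \<phi> j a * \<phi> j a)" using a by (simp add: res_def)
  then show ?thesis using eq by simp
qed

lemma bessel:
  assumes valid: "valid_graph G" and sub: "A \<subseteq> verts G"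
    and fam: "fam G A k \<phi> lam" and fin: "finite A" and a: "a \<in> A"
  shows "vmeas G a * (\<Sum>j<k. \<phi> j a * \<phi> j a) \<le> 1"
proof -
  have "vmeas G a > 0" using valid sub a unfolding valid_graph_def by auto
  moreover have "0 \<le> vmeas G a * (1 - vmeas G a * (\<Sum>j<k. \<phi> j a * \<phi> j a))"
    using res_norm[OF fam fin a] ip_nonneg[OF valid sub] by metis
  ultimately show ?thesis by (simp add: zero_le_mult_iff)
qed

lemma trace:
  assumes fam: "fam G A k \<phi> lam"
  shows "real k = (\<Sum>a\<in>A. vmeas G a * (\<Sum>j<k. \<phi> j a * \<phi> j a))"
proof -
  have "real k = (\<Sum>j<k. ip G A (\<phi> j) (\<phi> j))"
    using fam unfolding fam_def by simp
  also have "\<dots> = (\<Sum>a\<in>A. vmeas G a * (\<Sum>j<k. \<phi> j a * \<phi> j a))"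
    unfolding ip_def by (simp add: sum_distrib_left sum.swap[of _ A] mult_ac)
  finally show ?thesis .
qed

lemma fam_le_card:
  assumes valid: "valid_graph G" and sub: "A \<subseteq> verts G" and fam: "fam G A k \<phi> lam" and fin: "finite A"
  shows "k \<le> card A"
proof -
  have "real k \<le> (\<Sum>a\<in>A. 1)" unfolding trace[OF fam]
    by (rule sum_mono) (rule bessel[OF valid sub fam fin])
  then show ?thesis by simp
qed

lemma fam_card_complete:
  assumes valid: "valid_graph G" and sub: "A \<subseteq> verts G" and fam: "fam G A (card A) \<phi> lam" and fin: "finite A"
  shows "complete G A (card A) \<phi>"
proof -
  let ?s = "\<lambda>a. vmeas G a * (\<Sum>j<card A. \<phi> j a * \<phi> j a)"
  have "(\<Sum>a\<in>A. 1 - ?s a) = 0"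
    using trace[OF fam] by (simp add: sum_subtractf)
  then have z: "\<forall>a\<in>A. 1 - ?s a = 0"
    by (subst sum_nonneg_eq_0_iff[symmetric]) (use fin bessel[OF valid sub fam fin] in auto)
  show ?thesis unfolding complete_def
  proof (intro ballI)
    fix a b assume a: "a \<in> A" and b: "b \<in> A"
    have "vmeas G a > 0" using valid sub a unfolding valid_graph_def by auto
    then have "ip G A (res G A (card A) \<phi> a) (res G A (card A) \<phi> a) = 0"
      using res_norm[OF fam fin a] z a by simp
    from ip_zero[OF valid sub fin this b]
    show "vmeas G a * (\<Sum>j<card A. \<phi> j a * \<phi> j b) = (if a = b then 1 else 0)"
      using b by (simp add: res_def)
  qed
qed

lemma complete_card:
  assumes fam: "fam G A k \<phi> lam" and c: "complete G A k \<phi>"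
  shows "k = card A"
proof -
  have "real k = (\<Sum>a\<in>A. 1)" unfolding trace[OF fam]
    using c unfolding complete_def by (intro sum.cong) auto
  then show ?thesis by simp
qed

lemma incomplete_vec:
  assumes valid: "valid_graph G" and sub: "A \<subseteq> verts G" and fam: "fam G A k \<phi> lam" and fin: "finite A"
    and nc: "\<not> complete G A k \<phi>"
  shows "\<exists>f. supp A f \<and> ip G A f f = 1 \<and> (\<forall>j<k. ip G A f (\<phi> j) = 0)"
proof -
  from nc obtain a b where a: "a \<in> A" and b: "b \<in> A" and ne: "res G A k \<phi> a b \<noteq> 0"
    unfolding complete_def res_def by auto
  define r where "r = res G A k \<phi> a"
  define q where "q = ip G A r r"
  have q: "q > 0" unfolding q_def r_def by (rule ip_pos[OF valid sub fin b, of "res G A k \<phi> a"]) (use ne in simp)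
  define f where "f v = (1 / sqrt q) * r v + 0 * r v" for v
  have "ip G A f f = (1 / sqrt q) * ip G A r f"
    unfolding f_def ip_lin by simp
  also have "ip G A r f = ip G A f r" by (rule ip_sym)
  also have "ip G A f r = (1 / sqrt q) * q" unfolding f_def ip_lin q_def by simp
  also have "(1 / sqrt q) * ((1 / sqrt q) * q) = (1 / sqrt q) * (1 / sqrt q) * q" by simp
  also have "\<dots> = 1" using q by (simp add: real_sqrt_mult[symmetric])
  finally have "ip G A f f = 1" .
  moreover have "ip G A f (\<phi> j) = 0" if "j < k" for j
    unfolding f_def ip_lin using res_orth[OF fam fin a that] by (simp add: r_def)
  moreover have "supp A f" unfolding f_def r_def supp_def by (simp add: res_def)
  ultimately show ?thesis by blast
qed



lemma abs_le_1_sq: "\<bar>x::real\<bar> \<le> 1 + x * x"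
proof (cases "x \<ge> 0")
  case True
  have "0 \<le> (x - 1/2) * (x - 1/2)" by simp
  then show ?thesis using True by (simp add: algebra_simps)
next
  case False
  have "0 \<le> (x + 1/2) * (x + 1/2)" by simp
  then show ?thesis using False by (simp add: algebra_simps)
qed

lemma box_bound:
  assumes valid: "valid_graph G" and sub: "A \<subseteq> verts G" and fin: "finite A"
    and f: "ip G A f f = 1" and v: "v \<in> A"
  shows "\<bar>f v\<bar> \<le> 1 + 1 / vmeas G v"
proof -
  have pos: "\<And>u. u \<in> A \<Longrightarrow> vmeas G u > 0" using valid sub unfolding valid_graph_def by auto
  have "vmeas G v * f v * f v \<le> ip G A f f" unfolding ip_def
    by (rule member_le_sum) (use fin v pos in \<open>auto intro!: sq_term_nonneg simp: less_imp_le\<close>)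
  then have "vmeas G v * (f v * f v) \<le> 1" using f by (simp add: mult.assoc)
  then have "f v * f v \<le> 1 / vmeas G v" using pos[OF v] by (simp add: field_simps)
  then show ?thesis using abs_le_1_sq[of "f v"] by linarith
qed

lemma cont_ip1: "continuous_on UNIV (\<lambda>f::'v \<Rightarrow> real. ip G A f f)"
  unfolding ip_def
  by (intro continuous_intros continuous_on_product_coordinates)

lemma cont_ip2: "continuous_on UNIV (\<lambda>f::'v \<Rightarrow> real. ip G A f g)"
  unfolding ip_def
  by (intro continuous_intros continuous_on_product_coordinates)

lemma cont_qf: "valid_graph G \<Longrightarrow> continuous_on UNIV (\<lambda>f::'v \<Rightarrow> real. qf G A f)"
  unfolding qf_def lap_def
  by (intro continuous_intros continuous_on_product_coordinates)
    (auto simp: valid_graph_def incident_def dest!: bspec[of _ _ e for e] intro: less_imp_neq[symmetric])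

lemma compact_box:
  fixes c :: "'v \<Rightarrow> real"
  shows "compact (Pi\<^sub>E UNIV (\<lambda>v. if v \<in> A then {- c v..c v} else {0}))"
proof -
  have "compactin (product_topology (\<lambda>i. euclidean) UNIV) (Pi\<^sub>E UNIV (\<lambda>v. if v \<in> A then {- c v..c v} else {0::real}))"
    by (subst compactin_PiE) auto
  then show ?thesis by (simp add: euclidean_product_topology)
qed

lemma lap_scale: "lap G (\<lambda>u. s * h u) v = s * lap G h v"
  using lap_comb[of G s h 0 h 0 v] by simp

lemma qf_scale: "qf G A (\<lambda>u. s * h u) = s * s * qf G A h"
  unfolding qf_def lap_scale by (simp add: sum_distrib_left mult_ac)

lemma ip_scale: "ip G A (\<lambda>u. s * h u) (\<lambda>u. s * h u) = s * s * ip G A h h"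
  unfolding ip_def by (simp add: sum_distrib_left mult_ac)

lemma ip_scale1: "ip G A (\<lambda>u. s * h u) g = s * ip G A h g"
  unfolding ip_def by (simp add: sum_distrib_left mult_ac)

lemma extend:
  assumes valid: "valid_graph G" and lf: "locally_finite G" and fin: "finite A" and sub: "A \<subseteq> verts G"
    and fam: "fam G A k \<phi> lam"
    and f0: "supp A f0" "ip G A f0 f0 = 1" "\<forall>j<k. ip G A f0 (\<phi> j) = 0"
  shows "\<exists>f \<mu>. supp A f \<and> ip G A f f = 1 \<and> (\<forall>j<k. ip G A f (\<phi> j) = 0) \<and> (\<forall>v\<in>A. lap G f v = \<mu> * f v)"
proof -
  define c where "c v = 1 + 1 / vmeas G v" for v
  define P where "P = Pi\<^sub>E UNIV (\<lambda>v. if v \<in> A then {- c v..c v} else {0::real})"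
  define S where "S = P \<inter> {f. ip G A f f = 1} \<inter> (\<Inter>j\<in>{..<k}. {f. ip G A f (\<phi> j) = 0})"
  have inS: "f \<in> S \<longleftrightarrow> supp A f \<and> ip G A f f = 1 \<and> (\<forall>j<k. ip G A f (\<phi> j) = 0)" for f
  proof
    assume "f \<in> S"
    then show "supp A f \<and> ip G A f f = 1 \<and> (\<forall>j<k. ip G A f (\<phi> j) = 0)"
      unfolding S_def P_def supp_def PiE_iff by (auto split: if_splits)
  next
    assume h: "supp A f \<and> ip G A f f = 1 \<and> (\<forall>j<k. ip G A f (\<phi> j) = 0)"
    have "f \<in> P" unfolding P_def PiE_iff
    proof (intro conjI allI ballI)
      fix v
      show "f v \<in> (if v \<in> A then {- c v..c v} else {0})"
      proof (cases "v \<in> A")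
        case True
        then show ?thesis using box_bound[OF valid sub fin _ True, of f] h
          unfolding c_def by (simp add: abs_le_iff)
      next
        case False then show ?thesis using h unfolding supp_def by simp
      qed
    qed auto
    then show "f \<in> S" unfolding S_def using h by auto
  qed
  have "compact P" unfolding P_def by (rule compact_box)
  moreover have "closed {f. ip G A f f = 1}"
    by (rule closed_Collect_eq[OF cont_ip1 continuous_on_const])
  moreover have "closed (\<Inter>j\<in>{..<k}. {f. ip G A f (\<phi> j) = 0})"
    by (intro closed_INT ballI closed_Collect_eq[OF cont_ip2 continuous_on_const])
  ultimately have compact: "compact S" unfolding S_def by (intro compact_Int_closed)
  have ne: "S \<noteq> {}" using inS[of f0] f0 by auto
  obtain f where fS: "f \<in> S" and fmax: "\<And>h. h \<in> S \<Longrightarrow> qf G A h \<le> qf G A f"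
    using continuous_attains_sup[OF compact ne continuous_on_subset[OF cont_qf[OF valid] subset_UNIV]] by blast
  have fsupp: "supp A f" and fnorm: "ip G A f f = 1" and forth: "\<And>j. j < k \<Longrightarrow> ip G A f (\<phi> j) = 0"
    using fS inS by auto
  define \<mu> where "\<mu> = qf G A f"
  define g where "g v = (if v \<in> A then lap G f v - \<mu> * f v else 0)" for v
  have gsupp: "supp A g" unfolding supp_def g_def by simp
  have ipfg: "ip G A f g = 0"
  proof -
    have "ip G A f g = (\<Sum>v\<in>A. vmeas G v * lap G f v * f v - \<mu> * (vmeas G v * f v * f v))"
      unfolding ip_def by (rule sum.cong) (auto simp: g_def algebra_simps)
    also have "\<dots> = qf G A f - \<mu> * ip G A f f"
      unfolding qf_def ip_def by (simp add: sum_subtractf sum_distrib_left)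
    finally show ?thesis using fnorm by (simp add: \<mu>_def)
  qed
  have X: "(\<Sum>v\<in>A. vmeas G v * lap G f v * g v) = ip G A g g"
  proof -
    have "(\<Sum>v\<in>A. vmeas G v * lap G f v * g v) = (\<Sum>v\<in>A. vmeas G v * g v * g v + \<mu> * (vmeas G v * f v * g v))"
      by (rule sum.cong) (auto simp: g_def algebra_simps)
    also have "\<dots> = ip G A g g + \<mu> * ip G A f g"
      unfolding ip_def by (simp add: sum.distrib sum_distrib_left)
    finally show ?thesis using ipfg by simp
  qed
  have ipgphi: "ip G A g (\<phi> j) = 0" if j: "j < k" for j
  proof -
    have phisupp: "supp A (\<phi> j)" using fam j unfolding fam_def by auto
    have "ip G A g (\<phi> j) = (\<Sum>v\<in>A. vmeas G v * lap G f v * \<phi> j v - \<mu> * (vmeas G v * f v * \<phi> j v))"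
      unfolding ip_def by (rule sum.cong) (auto simp: g_def algebra_simps)
    also have "\<dots> = (\<Sum>v\<in>A. vmeas G v * lap G f v * \<phi> j v) - \<mu> * ip G A f (\<phi> j)"
      unfolding ip_def by (simp add: sum_subtractf sum_distrib_left)
    also have "(\<Sum>v\<in>A. vmeas G v * lap G f v * \<phi> j v) = (\<Sum>v\<in>A. vmeas G v * lap G (\<phi> j) v * f v)"
      by (rule lap_sym[OF lf fin sub valid fsupp phisupp])
    also have "\<dots> = lam j * ip G A f (\<phi> j)"
      unfolding ip_def sum_distrib_left
      by (rule sum.cong) (use fam j in \<open>auto simp: fam_def\<close>)
    finally show ?thesis using forth[OF j] by simp
  qed
  have symgf: "(\<Sum>v\<in>A. vmeas G v * lap G g v * f v) = (\<Sum>v\<in>A. vmeas G v * lap G f v * g v)"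
    by (rule lap_sym[OF lf fin sub valid gsupp fsupp])
  have qfcomb: "qf G A (\<lambda>u. 1 * f u + \<epsilon> * g u) = \<mu> + 2 * \<epsilon> * ip G A g g + \<epsilon> * \<epsilon> * qf G A g" for \<epsilon>
  proof -
    have "qf G A (\<lambda>u. 1 * f u + \<epsilon> * g u) = (\<Sum>v\<in>A. vmeas G v * (lap G f v + \<epsilon> * lap G g v) * (f v + \<epsilon> * g v))"
      unfolding qf_def lap_lin2 by simp
    also have "\<dots> = (\<Sum>v\<in>A. vmeas G v * lap G f v * f v) + \<epsilon> * (\<Sum>v\<in>A. vmeas G v * lap G f v * g v)
        + \<epsilon> * (\<Sum>v\<in>A. vmeas G v * lap G g v * f v) + \<epsilon> * \<epsilon> * (\<Sum>v\<in>A. vmeas G v * lap G g v * g v)"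
      by (simp add: sum.distrib sum_distrib_left algebra_simps)
    finally show ?thesis unfolding symgf X by (simp add: qf_def \<mu>_def algebra_simps)
  qed
  have ipcomb: "ip G A (\<lambda>u. 1 * f u + \<epsilon> * g u) (\<lambda>u. 1 * f u + \<epsilon> * g u) = 1 + \<epsilon> * \<epsilon> * ip G A g g" for \<epsilon>
  proof -
    have "ip G A (\<lambda>u. 1 * f u + \<epsilon> * g u) (\<lambda>u. 1 * f u + \<epsilon> * g u)
        = ip G A f (\<lambda>u. 1 * f u + \<epsilon> * g u) + \<epsilon> * ip G A g (\<lambda>u. 1 * f u + \<epsilon> * g u)"
      unfolding ip_lin by simp
    also have "ip G A f (\<lambda>u. 1 * f u + \<epsilon> * g u) = ip G A f f + \<epsilon> * ip G A g f"
      unfolding ip_def by (simp add: sum.distrib sum_distrib_left algebra_simps)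
    also have "ip G A g (\<lambda>u. 1 * f u + \<epsilon> * g u) = ip G A f g + \<epsilon> * ip G A g g"
      unfolding ip_def by (simp add: sum.distrib sum_distrib_left algebra_simps)
    finally show ?thesis using ipfg fnorm ip_sym[of G A g f] by simp
  qed
  define G2 where "G2 = ip G A g g"
  define C where "C = \<mu> * G2 - qf G A g"
  have G2nn: "G2 \<ge> 0" unfolding G2_def by (rule ip_nonneg[OF valid sub])
  have key: "2 * \<epsilon> * G2 \<le> \<epsilon> * \<epsilon> * C" if eps: "\<epsilon> > 0" for \<epsilon>
  proof -
    define h where "h u = 1 * f u + \<epsilon> * g u" for u
    define q where "q = 1 + \<epsilon> * \<epsilon> * G2"
    have q: "q > 0" unfolding q_def using G2nn by (simp add: add_pos_nonneg)
    define h' where "h' u = (1 / sqrt q) * h u" for u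
    have "h' \<in> S" unfolding inS
    proof (intro conjI allI impI)
      show "supp A h'" using fsupp gsupp unfolding supp_def h'_def h_def by simp
      have "ip G A h' h' = (1 / sqrt q) * (1 / sqrt q) * q"
        unfolding h'_def ip_scale h_def ipcomb q_def G2_def by simp
      also have "\<dots> = 1" using q by (simp add: real_sqrt_mult[symmetric])
      finally show "ip G A h' h' = 1" .
      fix j assume "j < k"
      then show "ip G A h' (\<phi> j) = 0"
        unfolding h'_def ip_scale1 h_def ip_lin using forth ipgphi by simp
    qed
    then have "qf G A h' \<le> \<mu>" using fmax unfolding \<mu>_def by blast
    moreover have "qf G A h' = qf G A h / q"
      unfolding h'_def qf_scale using q by (simp add: real_sqrt_mult[symmetric])
    ultimately have "qf G A h \<le> \<mu> * q" using q by (simp add: divide_le_eq)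
    then have "\<mu> + 2 * \<epsilon> * G2 + \<epsilon> * \<epsilon> * qf G A g \<le> \<mu> * (1 + \<epsilon> * \<epsilon> * G2)"
      unfolding h_def qfcomb q_def G2_def .
    then show ?thesis unfolding C_def by (simp add: algebra_simps)
  qed
  have G20: "G2 = 0"
  proof (rule ccontr)
    assume "G2 \<noteq> 0" then have Gp: "G2 > 0" using G2nn by simp
    define \<epsilon> where "\<epsilon> = G2 / (1 + \<bar>C\<bar>)"
    have ep: "\<epsilon> > 0" unfolding \<epsilon>_def using Gp by (simp add: add_pos_nonneg)
    have "2 * \<epsilon> * G2 \<le> \<epsilon> * (\<epsilon> * C)" using key[OF ep] by (simp add: mult.assoc)
    then have "2 * G2 \<le> \<epsilon> * C" using ep by (simp add: mult.assoc)
    also have "\<epsilon> * C \<le> \<epsilon> * \<bar>C\<bar>" using ep by (intro mult_left_mono) auto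
    also have "\<epsilon> * \<bar>C\<bar> < \<epsilon> * (1 + \<bar>C\<bar>)" using ep by simp
    also have "\<epsilon> * (1 + \<bar>C\<bar>) = G2" unfolding \<epsilon>_def by (simp add: add_pos_nonneg)
    finally show False using Gp by simp
  qed
  have "\<forall>v\<in>A. lap G f v = \<mu> * f v"
  proof
    fix v assume v: "v \<in> A"
    have "g v = 0" using ip_zero[OF valid sub fin _ v, of g] G20 unfolding G2_def by simp
    then show "lap G f v = \<mu> * f v" using v unfolding g_def by simp
  qed
  then show ?thesis using fsupp fnorm forth by blast
qed



lemma fam_zero: "fam G A 0 \<phi> lam"
  unfolding fam_def by simp

lemma fam_extend:
  assumes fam: "fam G A k \<phi> lam" and f: "supp A f" "ip G A f f = 1" "\<forall>j<k. ip G A f (\<phi> j) = 0"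
    and ev: "\<forall>v\<in>A. lap G f v = \<mu> * f v"
  shows "fam G A (Suc k) (\<phi>(k := f)) (lam(k := \<mu>))"
  unfolding fam_def
proof (intro conjI allI impI ballI)
  fix i assume i: "i < Suc k"
  then show "supp A ((\<phi>(k := f)) i)" using fam f unfolding fam_def by (cases "i = k") auto
next
  fix i v assume i: "i < Suc k" and v: "v \<in> A"
  then show "lap G ((\<phi>(k := f)) i) v = (lam(k := \<mu>)) i * (\<phi>(k := f)) i v"
    using fam ev unfolding fam_def by (cases "i = k") auto
next
  fix i j assume i: "i < Suc k" and j: "j < Suc k"
  show "ip G A ((\<phi>(k := f)) i) ((\<phi>(k := f)) j) = (if i = j then 1 else 0)"
  proof (cases "i = k")
    case True
    then show ?thesis using j f by (cases "j = k") auto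
  next
    case False
    then have ik: "i < k" using i by simp
    show ?thesis
    proof (cases "j = k")
      case True
      then show ?thesis using ik f ip_sym[of G A "\<phi> i" f] by auto
    next
      case False
      then show ?thesis using ik j fam unfolding fam_def by auto
    qed
  qed
qed

lemma exists_fam_aux:
  assumes valid: "valid_graph G" and lf: "locally_finite G" and fin: "finite A" and sub: "A \<subseteq> verts G"
  shows "\<exists>\<phi> lam k. fam G A k \<phi> lam \<and> (complete G A k \<phi> \<or> k = m)"
proof (induction m)
  case 0
  show ?case using fam_zero by blast
next
  case (Suc m)
  then obtain \<phi> lam k where fam: "fam G A k \<phi> lam" and c: "complete G A k \<phi> \<or> k = m" by blast
  show ?case
  proof (cases "complete G A k \<phi>")
    case True then show ?thesis using fam by blast
  next
    case False
    then have km: "k = m" using c by simp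
    obtain f0 where f0: "supp A f0" "ip G A f0 f0 = 1" "\<forall>j<k. ip G A f0 (\<phi> j) = 0"
      using incomplete_vec[OF valid sub fam fin False] by blast
    obtain f \<mu> where f: "supp A f" "ip G A f f = 1" "\<forall>j<k. ip G A f (\<phi> j) = 0" "\<forall>v\<in>A. lap G f v = \<mu> * f v"
      using extend[OF valid lf fin sub fam f0] by blast
    have "fam G A (Suc k) (\<phi>(k := f)) (lam(k := \<mu>))" by (rule fam_extend[OF fam f])
    then show ?thesis using km by blast
  qed
qed

lemma exists_eigenbasis:
  assumes valid: "valid_graph G" and lf: "locally_finite G" and fin: "finite A" and sub: "A \<subseteq> verts G"
  shows "\<exists>\<phi> lam. is_eigenbasis G A \<phi> lam"
proof -
  obtain \<phi> lam k where fam: "fam G A k \<phi> lam" and c: "complete G A k \<phi> \<or> k = Suc (card A)"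
    using exists_fam_aux[OF valid lf fin sub] by blast
  have "k \<le> card A" by (rule fam_le_card[OF valid sub fam fin])
  then have "complete G A k \<phi>" using c by auto
  then have "k = card A" by (rule complete_card[OF fam])
  then show ?thesis using fam eigenbasis_fam by blast
qed

lemma eb_props:
  assumes valid: "valid_graph G" and lf: "locally_finite G" and fin: "finite A" and sub: "A \<subseteq> verts G"
  shows "fam G A (card A) (fst (eb G A)) (snd (eb G A))" "complete G A (card A) (fst (eb G A))"
proof -
  have "\<exists>p. case p of (\<phi>, lam) \<Rightarrow> is_eigenbasis G A \<phi> lam"
    using exists_eigenbasis[OF assms] by auto
  then have "case eb G A of (\<phi>, lam) \<Rightarrow> is_eigenbasis G A \<phi> lam"
    unfolding eb_def by (rule someI_ex)
  then show f: "fam G A (card A) (fst (eb G A)) (snd (eb G A))"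
    by (simp add: case_prod_beta eigenbasis_fam)
  show "complete G A (card A) (fst (eb G A))" by (rule fam_card_complete[OF valid sub f fin])
qed

definition hkv :: "('v, 'e) wgraph \<Rightarrow> 'v set \<Rightarrow> 'v \<Rightarrow> 'v \<Rightarrow> real \<Rightarrow> real" where
  "hkv G A v w t = heat_kernel G A (Vx v) (Vx w) t"

lemma hkv_unfold: "hkv G A v w t = (\<Sum>i<card A. exp (- t * snd (eb G A) i) * fst (eb G A) i v * fst (eb G A) i w)"
  unfolding hkv_def hk_unfold by simp

lemma hk_rep: "heat_kernel G A x y t = lift G (\<lambda>v. lift G (\<lambda>w. hkv G A v w t) y) x"
proof -
  let ?\<phi> = "fst (eb G A)" and ?l = "snd (eb G A)"
  have "lift G (\<lambda>w. hkv G A v w t) y = (\<Sum>i<card A. (exp (- t * ?l i) * lift G (?\<phi> i) y) * ?\<phi> i v)" for v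
  proof -
    have "lift G (\<lambda>w. hkv G A v w t) y = lift G (\<lambda>w. \<Sum>i<card A. (exp (- t * ?l i) * ?\<phi> i v) * ?\<phi> i w) y"
      unfolding hkv_unfold by simp
    also have "\<dots> = (\<Sum>i<card A. (exp (- t * ?l i) * ?\<phi> i v) * lift G (?\<phi> i) y)"
      by (rule lift_sum_comb)
    finally show ?thesis by (simp add: mult_ac)
  qed
  then have "lift G (\<lambda>v. lift G (\<lambda>w. hkv G A v w t) y) x = (\<Sum>i<card A. (exp (- t * ?l i) * lift G (?\<phi> i) y) * lift G (?\<phi> i) x)"
    by (simp add: lift_sum_comb)
  then show ?thesis unfolding hk_unfold by (simp add: mult_ac)
qed

lemma hkv_out:
  assumes valid: "valid_graph G" and lf: "locally_finite G" and fin: "finite A" and sub: "A \<subseteq> verts G"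
    and out: "v \<notin> A \<or> w \<notin> A"
  shows "hkv G A v w t = 0"
proof -
  have "\<forall>i<card A. supp A (fst (eb G A) i)" using eb_props(1)[OF valid lf fin sub] unfolding fam_def by auto
  then show ?thesis unfolding hkv_unfold using out unfolding supp_def by auto
qed

lemma hkv_init:
  assumes valid: "valid_graph G" and lf: "locally_finite G" and fin: "finite A" and sub: "A \<subseteq> verts G"
    and v: "v \<in> A" and w: "w \<in> A"
  shows "hkv G A v w 0 = (if v = w then 1 / vmeas G w else 0)"
proof -
  have pos: "vmeas G v > 0" using valid sub v unfolding valid_graph_def by auto
  have "vmeas G v * (\<Sum>j<card A. fst (eb G A) j v * fst (eb G A) j w) = (if v = w then 1 else 0)"
    using eb_props(2)[OF valid lf fin sub] v w unfolding complete_def by auto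
  then have "(\<Sum>j<card A. fst (eb G A) j v * fst (eb G A) j w) = (if v = w then 1 / vmeas G w else 0)"
    using pos by (auto simp: field_simps split: if_splits)
  then show ?thesis unfolding hkv_unfold by (simp add: mult.assoc)
qed

lemma hkv_cont: "continuous_on {0..} (hkv G A v w)"
  unfolding hkv_unfold[abs_def] by (intro continuous_intros)

lemma hkv_deriv:
  assumes valid: "valid_graph G" and lf: "locally_finite G" and fin: "finite A" and sub: "A \<subseteq> verts G"
    and v: "v \<in> A"
  shows "(hkv G A v w has_real_derivative - lap G (\<lambda>u. hkv G A u w t) v) (at t)"
proof -
  let ?\<phi> = "fst (eb G A)" and ?l = "snd (eb G A)"
  have ev: "\<And>i. i < card A \<Longrightarrow> lap G (?\<phi> i) v = ?l i * ?\<phi> i v"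
    using eb_props(1)[OF valid lf fin sub] v unfolding fam_def by auto
  have "lap G (\<lambda>u. hkv G A u w t) v = lap G (\<lambda>u. \<Sum>i<card A. (exp (- t * ?l i) * ?\<phi> i w) * ?\<phi> i u) v"
    unfolding hkv_unfold by (simp add: mult_ac)
  also have "\<dots> = (\<Sum>i<card A. (exp (- t * ?l i) * ?\<phi> i w) * lap G (?\<phi> i) v)"
    by (rule lap_sum_comb)
  also have "\<dots> = (\<Sum>i<card A. exp (- t * ?l i) * ?l i * ?\<phi> i v * ?\<phi> i w)"
    by (rule sum.cong) (auto simp: ev mult_ac)
  finally have L: "lap G (\<lambda>u. hkv G A u w t) v = (\<Sum>i<card A. exp (- t * ?l i) * ?l i * ?\<phi> i v * ?\<phi> i w)" .
  have "((\<lambda>s. \<Sum>i<card A. exp (- s * ?l i) * ?\<phi> i v * ?\<phi> i w) has_real_derivative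
      (\<Sum>i<card A. exp (- t * ?l i) * (- ?l i) * ?\<phi> i v * ?\<phi> i w)) (at t)"
    by (intro DERIV_sum) (auto intro!: derivative_eq_intros)
  moreover have "(\<Sum>i<card A. exp (- t * ?l i) * (- ?l i) * ?\<phi> i v * ?\<phi> i w) = - lap G (\<lambda>u. hkv G A u w t) v"
    unfolding L by (simp add: sum_negf[symmetric])
  ultimately show ?thesis unfolding hkv_unfold[abs_def] by simp
qed



lemma lap_diff: "lap G (\<lambda>u. f u - h u) v = lap G f v - lap G h v"
  using lap_comb[of G 1 f "-1" h 0 v] by simp

lemma lap_cminus: "lap G (\<lambda>u. c - h u) v = - lap G h v"
  using lap_comb[of G 0 h "-1" h c v] by simp

lemma hkv_nonneg:
  assumes valid: "valid_graph G" and lf: "locally_finite G" and fin: "finite A" and sub: "A \<subseteq> verts G"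
    and w: "w \<in> verts G" and t: "t \<ge> 0"
  shows "hkv G A v w t \<ge> 0"
proof (cases "v \<in> A")
  case False then show ?thesis using hkv_out[OF valid lf fin sub] by simp
next
  case True
  show ?thesis
  proof (rule max_principle[OF valid fin sub, where z = "\<lambda>u. hkv G A u w", OF _ _ _ _ True t])
    show "\<And>v. v \<in> A \<Longrightarrow> continuous_on {0..} (hkv G A v w)" by (rule hkv_cont)
    show "\<And>v t. v \<in> A \<Longrightarrow> 0 < t \<Longrightarrow> (hkv G A v w has_real_derivative - lap G (\<lambda>u. hkv G A u w t) v) (at t)"
      by (rule hkv_deriv[OF valid lf fin sub])
    show "\<And>v. v \<in> A \<Longrightarrow> 0 \<le> hkv G A v w 0"
    proof -
      fix v assume v: "v \<in> A"
      show "0 \<le> hkv G A v w 0"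
      proof (cases "w \<in> A")
        case True
        have "vmeas G w > 0" using valid w unfolding valid_graph_def by auto
        then show ?thesis using hkv_init[OF valid lf fin sub v True] by simp
      next
        case False then show ?thesis using hkv_out[OF valid lf fin sub] by simp
      qed
    qed
    show "\<And>u t. u \<in> verts G \<Longrightarrow> u \<notin> A \<Longrightarrow> 0 \<le> t \<Longrightarrow> 0 \<le> hkv G A u w t"
      using hkv_out[OF valid lf fin sub] by simp
  qed
qed

lemma hkv_le:
  assumes valid: "valid_graph G" and lf: "locally_finite G" and fin: "finite A" and sub: "A \<subseteq> verts G"
    and w: "w \<in> verts G" and t: "t \<ge> 0"
  shows "hkv G A v w t \<le> 1 / vmeas G w"
proof -
  have wpos: "vmeas G w > 0" using valid w unfolding valid_graph_def by auto
  show ?thesis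
  proof (cases "v \<in> A \<and> w \<in> A")
    case False then show ?thesis using hkv_out[OF valid lf fin sub, of v w t] wpos by auto
  next
    case True
    have "0 \<le> 1 / vmeas G w - hkv G A v w t"
    proof (rule max_principle[OF valid fin sub, where z = "\<lambda>u s. 1 / vmeas G w - hkv G A u w s"])
      show "\<And>v. v \<in> A \<Longrightarrow> continuous_on {0..} (\<lambda>s. 1 / vmeas G w - hkv G A v w s)"
        using hkv_cont by (intro continuous_intros) auto
      fix v and s :: real assume v: "v \<in> A" and s: "0 < s"
      have "((\<lambda>s. 1 / vmeas G w - hkv G A v w s) has_real_derivative (0 - (- lap G (\<lambda>u. hkv G A u w s) v))) (at s)"
        by (intro DERIV_diff DERIV_const hkv_deriv[OF valid lf fin sub v])
      then show "((\<lambda>s. 1 / vmeas G w - hkv G A v w s) has_real_derivative - lap G (\<lambda>u. 1 / vmeas G w - hkv G A u w s) v) (at s)"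
        by (simp add: lap_cminus)
    next
      fix v assume v: "v \<in> A"
      show "0 \<le> 1 / vmeas G w - hkv G A v w 0"
        using hkv_init[OF valid lf fin sub v] True wpos by simp
    next
      fix u and s :: real assume "u \<in> verts G" "u \<notin> A" "0 \<le> s"
      then show "0 \<le> 1 / vmeas G w - hkv G A u w s" using hkv_out[OF valid lf fin sub] wpos by simp
    qed (use True t in auto)
    then show ?thesis by simp
  qed
qed

lemma hkv_mono:
  assumes valid: "valid_graph G" and lf: "locally_finite G" and finB: "finite B" and subB: "B \<subseteq> verts G"
    and AB: "A \<subseteq> B" and w: "w \<in> verts G" and t: "t \<ge> 0"
  shows "hkv G A v w t \<le> hkv G B v w t"
proof -
  have fin: "finite A" using finB AB by (rule finite_subset[rotated])
  have sub: "A \<subseteq> verts G" using AB subB by auto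
  show ?thesis
  proof (cases "v \<in> A")
    case False then show ?thesis using hkv_out[OF valid lf fin sub] hkv_nonneg[OF valid lf finB subB w t] by simp
  next
    case True
    have "0 \<le> hkv G B v w t - hkv G A v w t"
    proof (rule max_principle[OF valid fin sub, where z = "\<lambda>u s. hkv G B u w s - hkv G A u w s"])
      show "\<And>v. v \<in> A \<Longrightarrow> continuous_on {0..} (\<lambda>s. hkv G B v w s - hkv G A v w s)"
        using hkv_cont by (intro continuous_intros) auto
      fix v and s :: real assume v: "v \<in> A" and s: "0 < s"
      have vB: "v \<in> B" using v AB by auto
      have "((\<lambda>s. hkv G B v w s - hkv G A v w s) has_real_derivative
          (- lap G (\<lambda>u. hkv G B u w s) v - - lap G (\<lambda>u. hkv G A u w s) v)) (at s)"
        by (intro DERIV_diff hkv_deriv[OF valid lf finB subB vB] hkv_deriv[OF valid lf fin sub v])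
      then show "((\<lambda>s. hkv G B v w s - hkv G A v w s) has_real_derivative - lap G (\<lambda>u. hkv G B u w s - hkv G A u w s) v) (at s)"
        by (simp add: lap_diff)
    next
      fix v assume v: "v \<in> A"
      have vB: "v \<in> B" using v AB by auto
      show "0 \<le> hkv G B v w 0 - hkv G A v w 0"
      proof (cases "w \<in> A")
        case True
        then show ?thesis using hkv_init[OF valid lf fin sub v True] hkv_init[OF valid lf finB subB vB] AB by auto
      next
        case False
        then show ?thesis using hkv_out[OF valid lf fin sub] hkv_nonneg[OF valid lf finB subB w] by simp
      qed
    next
      fix u and s :: real assume "u \<in> verts G" "u \<notin> A" "0 \<le> s"
      then show "0 \<le> hkv G B u w s - hkv G A u w s"
        using hkv_out[OF valid lf fin sub] hkv_nonneg[OF valid lf finB subB w] by simp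
    qed (use True t in auto)
    then show ?thesis by simp
  qed
qed

lemma hkv_le_fund:
  assumes valid: "valid_graph G" and lf: "locally_finite G" and fin: "finite A" and sub: "A \<subseteq> interior G"
    and fs: "fundamental_solution G Gf" and nn: "\<forall>x\<in>pts G. \<forall>y\<in>pts G. \<forall>t\<ge>0. Gf x y t \<ge> 0"
    and v: "v \<in> verts G" and w: "w \<in> verts G" and t: "t \<ge> 0"
  shows "hkv G A v w t \<le> Gf (Vx v) (Vx w) t"
proof -
  have subv: "A \<subseteq> verts G" using sub unfolding interior_def by auto
  show ?thesis
  proof (cases "v \<in> A \<and> w \<in> A")
    have "Gf (Vx v) (Vx w) t \<ge> 0" using nn Vx_pts[OF v] Vx_pts[OF w] t by blast
    moreover case False
    ultimately show ?thesis using hkv_out[OF valid lf fin subv, of v w t] by auto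
  next
    case True
    then have wi: "w \<in> interior G" using sub by auto
    have dir: "dirichlet_ivp G (\<lambda>x t. Gf x (Vx w) t) (delta G w)"
      using fs wi unfolding fundamental_solution_def by auto
    then have hs: "heat_solution G (\<lambda>x t. Gf x (Vx w) t)" unfolding dirichlet_ivp_def by auto
    have gcont: "\<And>u. u \<in> verts G \<Longrightarrow> continuous_on {0..} (\<lambda>t. Gf (Vx u) (Vx w) t)"
      using hs unfolding heat_solution_def graph_continuous_def by auto
    have gder: "\<And>u s. u \<in> interior G \<Longrightarrow> s > 0 \<Longrightarrow>
        ((\<lambda>\<tau>. Gf (Vx u) (Vx w) \<tau>) has_real_derivative - lap G (\<lambda>x. Gf (Vx x) (Vx w) s) u) (at s)"
      using hs unfolding heat_solution_def by auto
    have ginit: "\<And>u. u \<in> interior G \<Longrightarrow> Gf (Vx u) (Vx w) 0 = (if u = w then 1 / vmeas G w else 0)"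
      using dir unfolding dirichlet_ivp_def delta_def by auto
    have "0 \<le> Gf (Vx v) (Vx w) t - hkv G A v w t"
    proof (rule max_principle[OF valid fin subv, where z = "\<lambda>u s. Gf (Vx u) (Vx w) s - hkv G A u w s"])
      show "\<And>v. v \<in> A \<Longrightarrow> continuous_on {0..} (\<lambda>s. Gf (Vx v) (Vx w) s - hkv G A v w s)"
        using hkv_cont gcont subv by (intro continuous_intros) auto
      fix u and s :: real assume u: "u \<in> A" and s: "0 < s"
      have ui: "u \<in> interior G" using u sub by auto
      have "((\<lambda>s. Gf (Vx u) (Vx w) s - hkv G A u w s) has_real_derivative
          (- lap G (\<lambda>x. Gf (Vx x) (Vx w) s) u - - lap G (\<lambda>x. hkv G A x w s) u)) (at s)"
        by (intro DERIV_diff gder[OF ui s] hkv_deriv[OF valid lf fin subv u])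
      then show "((\<lambda>s. Gf (Vx u) (Vx w) s - hkv G A u w s) has_real_derivative
          - lap G (\<lambda>x. Gf (Vx x) (Vx w) s - hkv G A x w s) u) (at s)"
        by (simp add: lap_diff)
    next
      fix u assume u: "u \<in> A"
      have ui: "u \<in> interior G" using u sub by auto
      show "0 \<le> Gf (Vx u) (Vx w) 0 - hkv G A u w 0"
        using ginit[OF ui] hkv_init[OF valid lf fin subv u] True by simp
    next
      fix u and s :: real assume us: "u \<in> verts G" "u \<notin> A" "0 \<le> s"
      have "Gf (Vx u) (Vx w) s \<ge> 0" using nn Vx_pts[OF us(1)] Vx_pts[OF w] us(3) by blast
      then show "0 \<le> Gf (Vx u) (Vx w) s - hkv G A u w s" using hkv_out[OF valid lf fin subv] us by simp
    qed (use True t in auto)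
    then show ?thesis by simp
  qed
qed



lemma lift_cong:
  assumes "valid_graph G" "p \<in> pts G" "\<And>v. v \<in> verts G \<Longrightarrow> f v = g v"
  shows "lift G f p = lift G g p"
  using lift_mono[OF assms(1,2), of f g] lift_mono[OF assms(1,2), of g f] assms(3) by force

lemma lift2_mono:
  assumes valid: "valid_graph G" and x: "x \<in> pts G" and y: "y \<in> pts G"
    and le: "\<And>v w. v \<in> verts G \<Longrightarrow> w \<in> verts G \<Longrightarrow> F v w \<le> H v w"
  shows "lift G (\<lambda>v. lift G (\<lambda>w. F v w) y) x \<le> lift G (\<lambda>v. lift G (\<lambda>w. H v w) y) x"
  by (intro lift_mono[OF valid x] lift_mono[OF valid y] le)

lemma hk_pts_mono:
  assumes valid: "valid_graph G" and lf: "locally_finite G" and finB: "finite B" and subB: "B \<subseteq> verts G"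
    and AB: "A \<subseteq> B" and x: "x \<in> pts G" and y: "y \<in> pts G" and t: "t \<ge> 0"
  shows "heat_kernel G A x y t \<le> heat_kernel G B x y t"
  unfolding hk_rep by (intro lift2_mono[OF valid x y] hkv_mono[OF valid lf finB subB AB _ t])

lemma hk_pts_bound:
  assumes valid: "valid_graph G" and lf: "locally_finite G" and fin: "finite A" and sub: "A \<subseteq> verts G"
    and x: "x \<in> pts G" and y: "y \<in> pts G" and t: "t \<ge> 0"
  shows "heat_kernel G A x y t \<le> lift G (\<lambda>v. lift G (\<lambda>w. 1 / vmeas G w) y) x"
  unfolding hk_rep by (intro lift2_mono[OF valid x y] hkv_le[OF valid lf fin sub _ t])

lemma hk_pts_fund:
  assumes valid: "valid_graph G" and lf: "locally_finite G" and fin: "finite A" and sub: "A \<subseteq> interior G"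
    and fs: "fundamental_solution G Gf" and nn: "\<forall>x\<in>pts G. \<forall>y\<in>pts G. \<forall>t\<ge>0. Gf x y t \<ge> 0"
    and x: "x \<in> pts G" and y: "y \<in> pts G" and t: "t \<ge> 0"
  shows "heat_kernel G A x y t \<le> Gf x y t"
proof -
  have el1: "edgewise_linear G (\<lambda>x. Gf x y t)" using fs y t unfolding fundamental_solution_def by auto
  have e1: "Gf x y t = lift G (\<lambda>v. Gf (Vx v) y t) x" using el1 x unfolding edgewise_linear_def by auto
  have e2: "Gf (Vx v) y t = lift G (\<lambda>w. Gf (Vx v) (Vx w) t) y" if v: "v \<in> verts G" for v
  proof -
    have "edgewise_linear G (\<lambda>y. Gf (Vx v) y t)" using fs Vx_pts[OF v] t unfolding fundamental_solution_def by auto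
    then show ?thesis using y unfolding edgewise_linear_def by auto
  qed
  have "Gf x y t = lift G (\<lambda>v. lift G (\<lambda>w. Gf (Vx v) (Vx w) t) y) x"
    unfolding e1 by (rule lift_cong[OF valid x]) (rule e2)
  moreover have "heat_kernel G A x y t \<le> lift G (\<lambda>v. lift G (\<lambda>w. Gf (Vx v) (Vx w) t) y) x"
    unfolding hk_rep by (intro lift2_mono[OF valid x y] hkv_le_fund[OF valid lf fin sub fs nn _ _ t])
  ultimately show ?thesis by simp
qed

lemma exh_props:
  assumes "exhaustion G A"
  shows "finite (A i)" "A i \<subseteq> interior G" "A i \<subseteq> verts G" "i \<le> j \<Longrightarrow> A i \<subseteq> A j"
proof -
  show "finite (A i)" "A i \<subseteq> interior G" using assms unfolding exhaustion_def by auto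
  then show "A i \<subseteq> verts G" unfolding interior_def by auto
  have "\<And>n. A n \<subseteq> A (Suc n)" using assms unfolding exhaustion_def by auto
  then show "i \<le> j \<Longrightarrow> A i \<subseteq> A j" by (rule lift_Suc_mono_le)
qed

lemma exh_cover:
  assumes ex: "exhaustion G B" and F: "finite F" "F \<subseteq> interior G"
  shows "\<exists>j. F \<subseteq> B j"
  using F
proof (induction F rule: finite_induct)
  case empty then show ?case by simp
next
  case (insert a F)
  then obtain j1 where j1: "F \<subseteq> B j1" by auto
  have "a \<in> (\<Union>i. B i)" using insert ex unfolding exhaustion_def by auto
  then obtain j2 where j2: "a \<in> B j2" by auto
  have "F \<subseteq> B (max j1 j2)" "B j2 \<subseteq> B (max j1 j2)"
    using j1 exh_props(4)[OF ex, of j1 "max j1 j2"] exh_props(4)[OF ex, of j2 "max j1 j2"] by auto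
  then show ?case using j2 by blast
qed

lemma seq_props:
  assumes valid: "valid_graph G" and lf: "locally_finite G" and ex: "exhaustion G B"
    and x: "x \<in> pts G" and y: "y \<in> pts G" and t: "t \<ge> 0"
  shows "mono (\<lambda>i. heat_kernel G (B i) x y t)" "bdd_above (range (\<lambda>i. heat_kernel G (B i) x y t))"
    "(\<lambda>i. heat_kernel G (B i) x y t) \<longlonglongrightarrow> (SUP i. heat_kernel G (B i) x y t)"
proof -
  show m: "mono (\<lambda>i. heat_kernel G (B i) x y t)"
    unfolding mono_def
    by (intro allI impI hk_pts_mono[OF valid lf exh_props(1)[OF ex] exh_props(3)[OF ex] exh_props(4)[OF ex] x y t])
  show b: "bdd_above (range (\<lambda>i. heat_kernel G (B i) x y t))"
    by (rule bdd_aboveI2[of _ _ "lift G (\<lambda>v. lift G (\<lambda>w. 1 / vmeas G w) y) x"])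
      (rule hk_pts_bound[OF valid lf exh_props(1)[OF ex] exh_props(3)[OF ex] x y t])
  show "(\<lambda>i. heat_kernel G (B i) x y t) \<longlonglongrightarrow> (SUP i. heat_kernel G (B i) x y t)"
    by (rule LIMSEQ_incseq_SUP[OF b m])
qed

lemma sup_le:
  assumes valid: "valid_graph G" and lf: "locally_finite G" and exA: "exhaustion G A" and exB: "exhaustion G B"
    and x: "x \<in> pts G" and y: "y \<in> pts G" and t: "t \<ge> 0"
  shows "(SUP i. heat_kernel G (A i) x y t) \<le> (SUP i. heat_kernel G (B i) x y t)"
proof (rule cSUP_least)
  fix i
  obtain j where j: "A i \<subseteq> B j" using exh_cover[OF exB exh_props(1,2)[OF exA]] by blast
  have "heat_kernel G (A i) x y t \<le> heat_kernel G (B j) x y t"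
    by (rule hk_pts_mono[OF valid lf exh_props(1)[OF exB] exh_props(3)[OF exB] j x y t])
  also have "\<dots> \<le> (SUP i. heat_kernel G (B i) x y t)"
    by (rule cSUP_upper[OF _ seq_props(2)[OF valid lf exB x y t]]) simp
  finally show "heat_kernel G (A i) x y t \<le> (SUP i. heat_kernel G (B i) x y t)" .
qed simp

theorem mainTheorem15:
  fixes G :: "('v, 'e) wgraph" and A :: "nat \<Rightarrow> 'v set"
  assumes "valid_graph G" and "locally_finite G" and "exhaustion G A"
  shows "\<exists>K. (\<forall>x\<in>pts G. \<forall>y\<in>pts G. \<forall>t\<ge>0.
                 mono (\<lambda>i. heat_kernel G (A i) x y t) \<and>
                 (\<lambda>i. heat_kernel G (A i) x y t) \<longlonglongrightarrow> K x y t) \<and>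
             (\<forall>B. exhaustion G B \<longrightarrow> (\<forall>x\<in>pts G. \<forall>y\<in>pts G. \<forall>t\<ge>0.
                 mono (\<lambda>i. heat_kernel G (B i) x y t) \<and>
                 (\<lambda>i. heat_kernel G (B i) x y t) \<longlonglongrightarrow> K x y t)) \<and>
             (\<forall>Gf. fundamental_solution G Gf \<and>
                   (\<forall>x\<in>pts G. \<forall>y\<in>pts G. \<forall>t\<ge>0. Gf x y t \<ge> 0) \<longrightarrow>
                   (\<forall>x\<in>pts G. \<forall>y\<in>pts G. \<forall>t\<ge>0. K x y t \<le> Gf x y t))"
proof -
  note valid = assms(1) and lf = assms(2) and exA = assms(3)
  define K where "K x y t = (SUP i. heat_kernel G (A i) x y t)" for x y t
  have P1: "\<forall>x\<in>pts G. \<forall>y\<in>pts G. \<forall>t\<ge>0. mono (\<lambda>i. heat_kernel G (A i) x y t) \<and>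
                 (\<lambda>i. heat_kernel G (A i) x y t) \<longlonglongrightarrow> K x y t"
    unfolding K_def using seq_props[OF valid lf exA] by blast
  have P2: "\<forall>B. exhaustion G B \<longrightarrow> (\<forall>x\<in>pts G. \<forall>y\<in>pts G. \<forall>t\<ge>0.
                 mono (\<lambda>i. heat_kernel G (B i) x y t) \<and>
                 (\<lambda>i. heat_kernel G (B i) x y t) \<longlonglongrightarrow> K x y t)"
  proof (intro allI impI ballI conjI)
    fix B x y and t :: real assume exB: "exhaustion G B" and x: "x \<in> pts G" and y: "y \<in> pts G" and t: "t \<ge> 0"
    show "mono (\<lambda>i. heat_kernel G (B i) x y t)" using seq_props(1)[OF valid lf exB x y t] .
    have "K x y t = (SUP i. heat_kernel G (B i) x y t)"
      unfolding K_def using sup_le[OF valid lf exA exB x y t] sup_le[OF valid lf exB exA x y t] by simp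
    then show "(\<lambda>i. heat_kernel G (B i) x y t) \<longlonglongrightarrow> K x y t"
      using seq_props(3)[OF valid lf exB x y t] by simp
  qed
  have P3: "\<forall>Gf. fundamental_solution G Gf \<and>
                   (\<forall>x\<in>pts G. \<forall>y\<in>pts G. \<forall>t\<ge>0. Gf x y t \<ge> 0) \<longrightarrow>
                   (\<forall>x\<in>pts G. \<forall>y\<in>pts G. \<forall>t\<ge>0. K x y t \<le> Gf x y t)"
  proof (intro allI impI ballI)
    fix Gf x y and t :: real
    assume h: "fundamental_solution G Gf \<and> (\<forall>x\<in>pts G. \<forall>y\<in>pts G. \<forall>t\<ge>0. Gf x y t \<ge> 0)"
      and x: "x \<in> pts G" and y: "y \<in> pts G" and t: "t \<ge> 0"
    show "K x y t \<le> Gf x y t" unfolding K_def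
      by (rule cSUP_least)
        (use hk_pts_fund[OF valid lf exh_props(1)[OF exA] exh_props(2)[OF exA] _ _ x y t] h in auto)
  qed
  show ?thesis using P1 P2 P3 by blast
qed


end
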